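(* Let $N\ge 3$, $N_e\ge 2$, $L\ge 1$ be integers, $P>0$, $\tau\in(0,1]$, $\sigma_R>0$, $c_4\in\mathbb{C}\setminus\{0\}$, $\alpha,\beta\in\mathbb{C}$ with $\alpha\neq0$ and $|\alpha|^2+|\beta|^2=1$, $\theta\in\mathbb{R}$ fixed, and $\mathbf{h}\in\mathbb{C}^N$ not a scalar multiple of $\mathbf{a}(\theta)$. Let $\mathbf{X}\in\mathbb{C}^{N\times L}$ be a known matrix (not depending on $\phi$) satisfying $\frac1L\mathbf{X}\mathbf{X}^H=\gamma_1\mathbf{t}_1\mathbf{t}_1^H+\gamma_2\sum_{i=3}^N\mathbf{t}_i\mathbf{t}_i^H$, where $\gamma_1=P\tau$, $\gamma_2=\frac{(1-\tau)P}{N-2}$. For $\phi\in(-\pi/2,\pi/2)$ consider the observation $\mathbf{Y}_{sr}=c_4\mathbf{c}(\phi)\mathbf{a}(\theta)^H\mathbf{X}+\mathbf{Z}_{sr}$, where the entries of $\mathbf{Z}_{sr}\in\mathbb{C}^{N_e\times L}$ are i.i.d. $\mathcal{CN}(0,\sigma_R^2)$, with unknown parameter $\xi=[\phi,\mathrm{Re}(c_4),\mathrm{Im}(c_4)]^T$. Let $\mathbf{u}_e(\xi)=\mathrm{vec}(c_4\mathbf{c}(\phi)\mathbf{a}(\theta)^H\mathbf{X})$, $\mathbf{F}_{i,j}=\frac{2}{\sigma_R^2}\mathrm{Re}\left\{\frac{\partial\mathbf{u}_e^H}{\partial\xi_i}\frac{\partial\mathbf{u}_e}{\partial\xi_j}\right\}$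 and $\mathrm{CRB}(\phi)=[\mathbf{F}^{-1}]_{1,1}$. Then $$\mathrm{CRB}(\phi)=\frac{\sigma_R^2}{2|c_4|^2L\gamma_1\|\mathbf{c}'\|^2|\alpha|^2N},\qquad \|\mathbf{c}'\|^2=\frac{\pi^2\cos^2(\phi)N_e(N_e^2-1)}{12},$$ where $\mathbf{c}'$ is the derivative of $\mathbf{c}(\phi)$ with respect to $\phi$. Consequently, if $\phi\sim\mathcal{U}(-\pi/2,\pi/2)$, then for every $\epsilon>0$, with $x_\epsilon=\sqrt{6}\,\sigma_R\left(\epsilon N_eN\pi^2LP|c_4|^2|\alpha|^2\tau(N_e^2-1)\right)^{-1/2}$, we have $P(\mathrm{CRB}(\phi)>\epsilon)=\frac{2}{\pi}\sin^{-1}(x_\epsilon)$ if $x_\epsilon<1$, and $P(\mathrm{CRB}(\phi)>\epsilon)=1$ otherwise.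
   Context: $\mathbf{a}(\theta)\in\mathbb{C}^N$ has $i$-th entry $e^{-j\pi\sin(\theta)\frac{N-(2i-1)}{2}}$; $\mathbf{c}(\phi)\in\mathbb{C}^{N_e}$ has $m$-th entry $e^{-j\pi\sin(\phi)\frac{N_e-(2m-1)}{2}}$. Define $\tilde{\mathbf{a}}=\mathbf{a}/\|\mathbf{a}\|$, $\tilde{\mathbf{h}}=\frac{\mathbf{h}-(\tilde{\mathbf{a}}^H\mathbf{h})\tilde{\mathbf{a}}}{\|\mathbf{h}-(\tilde{\mathbf{a}}^H\mathbf{h})\tilde{\mathbf{a}}\|}$, $\mathbf{t}_1=\alpha\tilde{\mathbf{a}}+\beta\tilde{\mathbf{h}}$, and let $\mathbf{t}_3,\dots,\mathbf{t}_N$ be an orthonormal basis of the orthogonal complement of $\mathrm{span}\{\tilde{\mathbf{a}},\tilde{\mathbf{h}}\}$ in $\mathbb{C}^N$. $\mathrm{vec}$ denotes column-stacking vectorization. *)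

theory Defs
  imports "HOL-Probability.Probability"
begin

text \<open>Vectors in C^n are functions nat => complex, indexed by 1..n.\<close>

definition steer :: "nat \<Rightarrow> real \<Rightarrow> nat \<Rightarrow> complex" where
  "steer n ang i = exp (- \<i> * complex_of_real (pi * sin ang * (real n - (2 * real i - 1)) / 2))"

definition cinner :: "nat \<Rightarrow> (nat \<Rightarrow> complex) \<Rightarrow> (nat \<Rightarrow> complex) \<Rightarrow> complex" where
  "cinner n u v = (\<Sum>i=1..n. cnj (u i) * v i)"

definition cvnorm :: "nat \<Rightarrow> (nat \<Rightarrow> complex) \<Rightarrow> real" where
  "cvnorm n u = sqrt (\<Sum>i=1..n. (cmod (u i))^2)"

definition cnormalize :: "nat \<Rightarrow> (nat \<Rightarrow> complex) \<Rightarrow> nat \<Rightarrow> complex" where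
  "cnormalize n u = (\<lambda>i. u i / complex_of_real (cvnorm n u))"

definition atil :: "nat \<Rightarrow> real \<Rightarrow> nat \<Rightarrow> complex" where
  "atil N \<theta> = cnormalize N (steer N \<theta>)"

definition htil :: "nat \<Rightarrow> real \<Rightarrow> (nat \<Rightarrow> complex) \<Rightarrow> nat \<Rightarrow> complex" where
  "htil N \<theta> h = cnormalize N (\<lambda>i. h i - cinner N (atil N \<theta>) h * atil N \<theta> i)"

definition tvec1 :: "nat \<Rightarrow> real \<Rightarrow> (nat \<Rightarrow> complex) \<Rightarrow> complex \<Rightarrow> complex \<Rightarrow> nat \<Rightarrow> complex" where
  "tvec1 N \<theta> h \<alpha> \<beta> = (\<lambda>i. \<alpha> * atil N \<theta> i + \<beta> * htil N \<theta> h i)"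

text \<open>u_e(xi), xi = [phi, Re c4, Im c4]; entries indexed by (m,l), m in 1..Ne, l in 1..L
  (the entries of vec(c4 c(phi) a(theta)^H X)).\<close>
definition ue :: "nat \<Rightarrow> nat \<Rightarrow> real \<Rightarrow> (nat \<Rightarrow> nat \<Rightarrow> complex) \<Rightarrow> real^3 \<Rightarrow> nat \<times> nat \<Rightarrow> complex" where
  "ue N Ne \<theta> X \<xi> = (\<lambda>(m, l). Complex (\<xi>$2) (\<xi>$3) * steer Ne (\<xi>$1) m
        * (\<Sum>i=1..N. cnj (steer N \<theta> i) * X i l))"

definition due :: "nat \<Rightarrow> nat \<Rightarrow> real \<Rightarrow> (nat \<Rightarrow> nat \<Rightarrow> complex) \<Rightarrow> 3 \<Rightarrow> real^3 \<Rightarrow> nat \<times> nat \<Rightarrow> complex" where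
  "due N Ne \<theta> X i \<xi> k = vector_derivative (\<lambda>s. ue N Ne \<theta> X (\<xi> + s *\<^sub>R axis i 1) k) (at 0)"

definition fisher :: "nat \<Rightarrow> nat \<Rightarrow> nat \<Rightarrow> real \<Rightarrow> (nat \<Rightarrow> nat \<Rightarrow> complex) \<Rightarrow> real \<Rightarrow> real^3 \<Rightarrow> real^3^3" where
  "fisher N Ne L \<theta> X \<sigma> \<xi> = (\<chi> i j. 2 / \<sigma>^2 *
      Re (\<Sum>k\<in>{1..Ne}\<times>{1..L}. cnj (due N Ne \<theta> X i \<xi> k) * due N Ne \<theta> X j \<xi> k))"

definition crb :: "nat \<Rightarrow> nat \<Rightarrow> nat \<Rightarrow> real \<Rightarrow> (nat \<Rightarrow> nat \<Rightarrow> complex) \<Rightarrow> real \<Rightarrow> complex \<Rightarrow> real \<Rightarrow> real" where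
  "crb N Ne L \<theta> X \<sigma> c4 \<phi> = matrix_inv (fisher N Ne L \<theta> X \<sigma> (vector [\<phi>, Re c4, Im c4])) $ 1 $ 1"

definition dnorm2 :: "nat \<Rightarrow> real \<Rightarrow> real" where
  "dnorm2 Ne \<phi> = (\<Sum>m=1..Ne. (cmod (vector_derivative (\<lambda>p. steer Ne p m) (at \<phi>)))^2)"

end

theory Submission
  imports Defs
begin


lemma vd_of_real:
  assumes "(f has_field_derivative f') (at 0)"
  shows "vector_derivative (\<lambda>s::real. f (of_real s)) (at 0) = f'"
  apply (rule vector_derivative_at)
  using has_vector_derivative_real_field[of f f' 0] assms by simp

definition dd :: "nat \<Rightarrow> nat \<Rightarrow> real" where
  "dd n m = real n - (2 * real m - 1)"

definition steerC :: "nat \<Rightarrow> nat \<Rightarrow> complex \<Rightarrow> complex" where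
  "steerC n m z = exp (- \<i> * (of_real pi * sin z * of_real (dd n m) / 2))"

lemma steerC_real: "steerC n m (of_real p) = steer n p m"
  by (simp add: steerC_def steer_def dd_def sin_of_real[symmetric] mult_ac)

lemma steerC_deriv: "(steerC n m has_field_derivative
   (- \<i> * of_real (pi * cos p * dd n m / 2) * steer n p m)) (at (of_real p))"
  unfolding steerC_def
  apply (rule derivative_eq_intros refl | simp)+
  apply (simp add: steer_def dd_def cos_of_real[symmetric] sin_of_real[symmetric] mult_ac)
  done

definition bb :: "nat \<Rightarrow> real \<Rightarrow> (nat \<Rightarrow> nat \<Rightarrow> complex) \<Rightarrow> nat \<Rightarrow> complex" where
  "bb N \<theta> X l = (\<Sum>i=1..N. cnj (steer N \<theta> i) * X i l)"

lemma axis_comp: "(\<xi> + s *\<^sub>R axis (i::3) (1::real)) $ j = (if j = i then \<xi> $ j + s else \<xi> $ j)"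
  by (simp add: axis_def)

lemma due1: "due N Ne \<theta> X 1 \<xi> (m, l) =
  Complex (\<xi>$2) (\<xi>$3) * (- \<i> * of_real (pi * cos (\<xi>$1) * dd Ne m / 2) * steer Ne (\<xi>$1) m) * bb N \<theta> X l"
proof -
  have e: "(\<lambda>s. ue N Ne \<theta> X (\<xi> + s *\<^sub>R axis 1 1) (m, l)) =
     (\<lambda>s. (\<lambda>z. Complex (\<xi>$2) (\<xi>$3) * steerC Ne m (z + of_real (\<xi>$1)) * bb N \<theta> X l) (of_real s))"
    by (auto simp: ue_def axis_def bb_def steerC_real[symmetric] add.commute)
  have d: "(steerC Ne m has_field_derivative
   (- \<i> * of_real (pi * cos (\<xi>$1) * dd Ne m / 2) * steer Ne (\<xi>$1) m)) (at (0 + of_real (\<xi>$1)))"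
    using steerC_deriv by simp
  have d2: "((\<lambda>z. steerC Ne m (z + of_real (\<xi>$1))) has_field_derivative
   (- \<i> * of_real (pi * cos (\<xi>$1) * dd Ne m / 2) * steer Ne (\<xi>$1) m)) (at 0)"
    using DERIV_shift d by blast
  show ?thesis unfolding due_def e
    by (rule vd_of_real) (auto intro!: derivative_eq_intros d2)
qed

lemma due2: "due N Ne \<theta> X 2 \<xi> (m, l) = steer Ne (\<xi>$1) m * bb N \<theta> X l"
proof -
  have e: "(\<lambda>s. ue N Ne \<theta> X (\<xi> + s *\<^sub>R axis 2 1) (m, l)) =
     (\<lambda>s. (\<lambda>z. (Complex (\<xi>$2) (\<xi>$3) + z) * steer Ne (\<xi>$1) m * bb N \<theta> X l) (of_real s))"
    by (auto simp: ue_def axis_def bb_def complex_eq_iff)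
  show ?thesis unfolding due_def e
    by (rule vd_of_real) (auto intro!: derivative_eq_intros)
qed

lemma due3: "due N Ne \<theta> X 3 \<xi> (m, l) = \<i> * steer Ne (\<xi>$1) m * bb N \<theta> X l"
proof -
  have e: "(\<lambda>s. ue N Ne \<theta> X (\<xi> + s *\<^sub>R axis 3 1) (m, l)) =
     (\<lambda>s. (\<lambda>z. (Complex (\<xi>$2) (\<xi>$3) + \<i> * z) * steer Ne (\<xi>$1) m * bb N \<theta> X l) (of_real s))"
    by (auto simp: ue_def axis_def bb_def complex_eq_iff)
  show ?thesis unfolding due_def e
    by (rule vd_of_real) (auto intro!: derivative_eq_intros)
qed

lemma sum_dd_gen: "(\<Sum>m=1..k. dd n m) = real k * real n - real k ^ 2"
  by (induction k) (auto simp: dd_def algebra_simps power2_eq_square)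

lemma sum_dd: "(\<Sum>m=1..n. dd n m) = 0"
  using sum_dd_gen[of n n] by (simp add: power2_eq_square)

lemma sum_dd2_gen: "(\<Sum>m=1..k. (dd n m)^2) =
   real k * (real n + 1)^2 - 2 * (real n + 1) * real k * (real k + 1) + 2/3 * real k * (real k + 1) * (2 * real k + 1)"
proof (induction k)
  case 0 then show ?case by simp
next
  case (Suc k)
  have "(\<Sum>m=1..Suc k. (dd n m)^2) = (\<Sum>m=1..k. (dd n m)^2) + (dd n (Suc k))^2" by simp
  also have "\<dots> = real k * (real n + 1)^2 - 2 * (real n + 1) * real k * (real k + 1) + 2/3 * real k * (real k + 1) * (2 * real k + 1) + (real n - (2 * (real k + 1) - 1))^2"
    using Suc.IH by (simp add: dd_def)
  also have "\<dots> = real (Suc k) * (real n + 1)^2 - 2 * (real n + 1) * real (Suc k) * (real (Suc k) + 1) + 2/3 * real (Suc k) * (real (Suc k) + 1) * (2 * real (Suc k) + 1)"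
    by (simp add: algebra_simps power2_eq_square)
  finally show ?case .
qed

lemma sum_dd2: "(\<Sum>m=1..n. (dd n m)^2) = real n * ((real n)^2 - 1) / 3"
  using sum_dd2_gen[of n n] by (simp add: algebra_simps power2_eq_square)

lemma cmod_steer[simp]: "cmod (steer n p m) = 1"
  by (simp add: steer_def)

lemma cnj_steer_mult[simp]: "cnj (steer n p m) * steer n p m = 1"
  using complex_norm_square[of "steer n p m"] by (simp add: mult.commute)

lemma matrix_inv_diag3:
  fixes A :: "real^3^3"
  assumes "A$1$2 = 0" "A$1$3 = 0" "A$2$1 = 0" "A$3$1 = 0" "A$2$3 = 0" "A$3$2 = 0"
    "A$1$1 \<noteq> 0" "A$2$2 \<noteq> 0" "A$3$3 \<noteq> 0"
  shows "matrix_inv A $ 1 $ 1 = 1 / A$1$1"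
proof -
  define B :: "real^3^3" where "B = (\<chi> i j. if i = j then 1 / A$i$i else 0)"
  have AB: "A ** B = mat 1" and BA: "B ** A = mat 1"
    using assms by (auto simp: vec_eq_iff forall_3 sum_3 matrix_matrix_mult_def mat_def B_def)
  have "matrix_inv A = B"
  proof -
    have ex: "\<exists>A'. A ** A' = mat 1 \<and> A' ** A = mat 1" using AB BA by blast
    have *: "A ** matrix_inv A = mat 1 \<and> matrix_inv A ** A = mat 1"
      unfolding matrix_inv_def by (rule someI_ex[OF ex])
    have "matrix_inv A = (B ** A) ** matrix_inv A" using BA by (simp add: matrix_mul_lid)
    also have "\<dots> = B ** (A ** matrix_inv A)" by (simp add: matrix_mul_assoc)
    also have "\<dots> = B" using * by (simp add: matrix_mul_rid)
    finally show ?thesis .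
  qed
  then show ?thesis using assms by (simp add: B_def)
qed

lemma cinner_div: "cinner n u (\<lambda>i. v i / k) = cinner n u v / k"
  by (simp add: cinner_def sum_divide_distrib)
lemma cinner_diff: "cinner n u (\<lambda>i. v i - w i) = cinner n u v - cinner n u w"
  by (simp add: cinner_def algebra_simps sum_subtractf)
lemma cinner_add: "cinner n u (\<lambda>i. v i + w i) = cinner n u v + cinner n u w"
  by (simp add: cinner_def algebra_simps sum.distrib)
lemma cinner_cmult: "cinner n u (\<lambda>i. c * v i) = c * cinner n u v"
  by (simp add: cinner_def algebra_simps sum_distrib_left)

lemma double_sum_outer: "(\<Sum>i\<in>A. \<Sum>j\<in>A. a i * cnj (a j) * (v j * cnj (v i))) =
    (\<Sum>j\<in>A. cnj (a j) * v j) * cnj (\<Sum>i\<in>A. cnj (a i) * v i)"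
proof -
  have "(\<Sum>j\<in>A. cnj (a j) * v j) * cnj (\<Sum>i\<in>A. cnj (a i) * v i)
      = (\<Sum>j\<in>A. cnj (a j) * v j) * (\<Sum>i\<in>A. a i * cnj (v i))" by simp
  also have "\<dots> = (\<Sum>j\<in>A. \<Sum>i\<in>A. (cnj (a j) * v j) * (a i * cnj (v i)))" by (rule sum_product)
  also have "\<dots> = (\<Sum>i\<in>A. \<Sum>j\<in>A. (cnj (a j) * v j) * (a i * cnj (v i)))" by (rule sum.swap)
  also have "\<dots> = (\<Sum>i\<in>A. \<Sum>j\<in>A. a i * cnj (a j) * (v j * cnj (v i)))"
    by (intro sum.cong refl) (simp add: mult_ac)
  finally show ?thesis by simp
qed

lemma expand_bb:
  "(\<Sum>l=1..L. cnj (bb N \<theta> X l) * bb N \<theta> X l) =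
   (\<Sum>i=1..N. \<Sum>j=1..N. steer N \<theta> i * cnj (steer N \<theta> j) * (\<Sum>l=1..L. X j l * cnj (X i l)))"
proof -
  have "(\<Sum>l=1..L. cnj (bb N \<theta> X l) * bb N \<theta> X l) =
     (\<Sum>l=1..L. (\<Sum>i=1..N. steer N \<theta> i * cnj (X i l)) * (\<Sum>j=1..N. cnj (steer N \<theta> j) * X j l))"
    by (simp add: bb_def)
  also have "\<dots> = (\<Sum>l=1..L. \<Sum>i=1..N. \<Sum>j=1..N. (steer N \<theta> i * cnj (X i l)) * (cnj (steer N \<theta> j) * X j l))"
    by (simp add: sum_product)
  also have "\<dots> = (\<Sum>i=1..N. \<Sum>l=1..L. \<Sum>j=1..N. (steer N \<theta> i * cnj (X i l)) * (cnj (steer N \<theta> j) * X j l))"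
    by (rule sum.swap)
  also have "\<dots> = (\<Sum>i=1..N. \<Sum>j=1..N. \<Sum>l=1..L. (steer N \<theta> i * cnj (X i l)) * (cnj (steer N \<theta> j) * X j l))"
    by (rule sum.cong[OF refl], rule sum.swap)
  also have "\<dots> = (\<Sum>i=1..N. \<Sum>j=1..N. steer N \<theta> i * cnj (steer N \<theta> j) * (\<Sum>l=1..L. X j l * cnj (X i l)))"
    by (intro sum.cong refl) (simp add: sum_distrib_left mult_ac)
  finally show ?thesis .
qed

lemma bb_norm:
  fixes t :: "nat \<Rightarrow> nat \<Rightarrow> complex"
  assumes N1: "N \<ge> 1" and L1: "L \<ge> 1"
    and orth: "\<forall>k\<in>{3..N}. cinner N (atil N \<theta>) (t k) = 0"
    and XX: "\<forall>i\<in>{1..N}. \<forall>i'\<in>{1..N}.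
           (\<Sum>l=1..L. X i l * cnj (X i' l)) / of_nat L
           = complex_of_real (P * \<tau>) * tvec1 N \<theta> h \<alpha> \<beta> i * cnj (tvec1 N \<theta> h \<alpha> \<beta> i')
             + complex_of_real g2 * (\<Sum>k=3..N. t k i * cnj (t k i'))"
  shows "(\<Sum>l=1..L. cnj (bb N \<theta> X l) * bb N \<theta> X l) = of_real (real L * (P*\<tau>) * (cmod \<alpha>)^2 * real N)"
proof -
  define a where "a = steer N \<theta>"
  define s where "s = sqrt (real N)"
  define t1 where "t1 = tvec1 N \<theta> h \<alpha> \<beta>"
  have s0: "s \<noteq> 0" using N1 by (simp add: s_def)
  have cv: "cvnorm N a = s" by (simp add: cvnorm_def a_def s_def)
  have at: "atil N \<theta> = (\<lambda>i. a i / of_real s)" by (simp add: atil_def cnormalize_def cv[unfolded a_def] a_def)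
  have ca: "cinner N a v = of_real s * cinner N (atil N \<theta>) v" for v
    using s0 by (simp add: cinner_def at sum_distrib_left)
  have caa0: "cinner N a a = of_nat N" by (simp add: cinner_def a_def)
  have caa: "cinner N a (atil N \<theta>) = of_real s"
    unfolding at cinner_div caa0 using s0 N1
    by (simp add: s_def field_simps flip: of_real_mult)
  have cah: "cinner N a (htil N \<theta> h) = 0"
    unfolding htil_def cnormalize_def cinner_div cinner_diff cinner_cmult caa
    by (simp add: ca[of h])
  have ca1: "cinner N a t1 = \<alpha> * of_real s"
    unfolding t1_def tvec1_def cinner_add cinner_cmult caa cah by simp
  have cak: "cinner N a (t k) = 0" if "k \<in> {3..N}" for k
    using orth that ca by simp
  have L0: "of_nat L \<noteq> (0::complex)" using L1 by simp
  have XX': "(\<Sum>l=1..L. X j l * cnj (X i l)) = of_nat L * (of_real (P*\<tau>) * (t1 j * cnj (t1 i))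
     + of_real g2 * (\<Sum>k=3..N. t k j * cnj (t k i)))" if "i \<in> {1..N}" "j \<in> {1..N}" for i j
    using XX that L0 unfolding t1_def by (auto simp: field_simps)
  have "(\<Sum>l=1..L. cnj (bb N \<theta> X l) * bb N \<theta> X l)
      = (\<Sum>i=1..N. \<Sum>j=1..N. a i * cnj (a j) * (of_nat L * (of_real (P*\<tau>) * (t1 j * cnj (t1 i))
     + of_real g2 * (\<Sum>k=3..N. t k j * cnj (t k i)))))"
    unfolding expand_bb a_def[symmetric] by (intro sum.cong refl, subst XX') auto
  also have "\<dots> = of_nat L * of_real (P*\<tau>) * (\<Sum>i=1..N. \<Sum>j=1..N. a i * cnj (a j) * (t1 j * cnj (t1 i)))
     + of_nat L * of_real g2 * (\<Sum>i=1..N. \<Sum>j=1..N. \<Sum>k=3..N. a i * cnj (a j) * (t k j * cnj (t k i)))"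
    by (simp add: sum_distrib_left sum.distrib algebra_simps)
  also have "(\<Sum>i=1..N. \<Sum>j=1..N. \<Sum>k=3..N. a i * cnj (a j) * (t k j * cnj (t k i)))
      = (\<Sum>k=3..N. \<Sum>i=1..N. \<Sum>j=1..N. a i * cnj (a j) * (t k j * cnj (t k i)))"
  proof -
    have "(\<Sum>i=1..N. \<Sum>j=1..N. \<Sum>k=3..N. a i * cnj (a j) * (t k j * cnj (t k i)))
       = (\<Sum>i=1..N. \<Sum>k=3..N. \<Sum>j=1..N. a i * cnj (a j) * (t k j * cnj (t k i)))"
      by (rule sum.cong[OF refl], rule sum.swap)
    also have "\<dots> = (\<Sum>k=3..N. \<Sum>i=1..N. \<Sum>j=1..N. a i * cnj (a j) * (t k j * cnj (t k i)))"
      by (rule sum.swap)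
    finally show ?thesis .
  qed
  also have "(\<Sum>k=3..N. \<Sum>i=1..N. \<Sum>j=1..N. a i * cnj (a j) * (t k j * cnj (t k i))) = 0"
  proof -
    have z: "(\<Sum>i=1..N. \<Sum>j=1..N. a i * cnj (a j) * (t k j * cnj (t k i))) = 0" if k: "k \<in> {3..N}" for k
      unfolding double_sum_outer using cak[OF k] unfolding cinner_def by simp
    show ?thesis by (rule sum.neutral) (use z in blast)
  qed
  also have "(\<Sum>i=1..N. \<Sum>j=1..N. a i * cnj (a j) * (t1 j * cnj (t1 i))) = \<alpha> * cnj \<alpha> * of_real (s^2)"
    unfolding double_sum_outer using ca1 unfolding cinner_def by (simp add: power2_eq_square)
  finally show ?thesis
    using N1 by (simp add: s_def flip: complex_norm_square of_real_mult) (simp add: mult_ac)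
qed

lemma steer_vd: "vector_derivative (\<lambda>p. steer n p m) (at p) =
   - \<i> * of_real (pi * cos p * dd n m / 2) * steer n p m"
  apply (rule vector_derivative_at)
  using has_vector_derivative_real_field[OF steerC_deriv[of n m p]] by (simp add: steerC_real)

lemma dnorm2_eq: "dnorm2 n p = pi^2 * (cos p)^2 * real n * ((real n)^2 - 1) / 12"
proof -
  have "dnorm2 n p = (\<Sum>m=1..n. (pi * cos p / 2)^2 * (dd n m)^2)"
    unfolding dnorm2_def steer_vd
    by (intro sum.cong refl) (simp add: norm_mult abs_mult power_divide power_mult_distrib power2_abs)
  also have "\<dots> = (pi * cos p / 2)^2 * (real n * ((real n)^2 - 1) / 3)"
    using sum_dd2[of n] by (simp add: sum_distrib_left[symmetric])
  finally show ?thesis by (simp add: field_simps power_mult_distrib power_divide)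
qed

definition UU :: "nat \<Rightarrow> complex \<Rightarrow> real \<Rightarrow> 3 \<Rightarrow> nat \<Rightarrow> complex" where
  "UU Ne c p i m = (if i = 1 then c * (- \<i> * of_real (pi * cos p * dd Ne m / 2) * steer Ne p m)
      else if i = 2 then steer Ne p m else \<i> * steer Ne p m)"

lemma due_UU: "due N Ne \<theta> X i (vector [p, Re c, Im c]) (m, l) = UU Ne c p i m * bb N \<theta> X l"
  using exhaust_3[of i] by (elim disjE) (simp_all add: due1 due2 due3 UU_def)

lemma fisher_UU: "fisher N Ne L \<theta> X \<sigma> (vector [p, Re c, Im c]) $ i $ j =
   2 / \<sigma>^2 * Re ((\<Sum>m=1..Ne. cnj (UU Ne c p i m) * UU Ne c p j m) * (\<Sum>l=1..L. cnj (bb N \<theta> X l) * bb N \<theta> X l))"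
proof -
  have "(\<Sum>k\<in>{1..Ne}\<times>{1..L}. cnj (due N Ne \<theta> X i (vector [p, Re c, Im c]) k) * due N Ne \<theta> X j (vector [p, Re c, Im c]) k)
     = (\<Sum>m=1..Ne. \<Sum>l=1..L. cnj (UU Ne c p i m) * UU Ne c p j m * (cnj (bb N \<theta> X l) * bb N \<theta> X l))"
    unfolding sum.cartesian_product by (intro sum.cong refl) (auto simp: due_UU mult_ac)
  also have "\<dots> = (\<Sum>m=1..Ne. cnj (UU Ne c p i m) * UU Ne c p j m) * (\<Sum>l=1..L. cnj (bb N \<theta> X l) * bb N \<theta> X l)"
    by (simp add: sum_product)
  finally have E: "(\<Sum>k\<in>{1..Ne}\<times>{1..L}. cnj (due N Ne \<theta> X i (vector [p, Re c, Im c]) k) * due N Ne \<theta> X j (vector [p, Re c, Im c]) k) = (\<Sum>m=1..Ne. cnj (UU Ne c p i m) * UU Ne c p j m) * (\<Sum>l=1..L. cnj (bb N \<theta> X l) * bb N \<theta> X l)" .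
  show ?thesis unfolding fisher_def vec_lambda_beta E by (rule refl)
qed

lemma cd_c: "cnj (- \<i> * of_real r * steer n p m) * steer n p m = \<i> * of_real r"
proof -
  have "cnj (- \<i> * of_real r * steer n p m) * steer n p m = \<i> * of_real r * (cnj (steer n p m) * steer n p m)"
    by (simp add: mult_ac)
  then show ?thesis by simp
qed
lemma c_cd: "cnj (steer n p m) * (- \<i> * of_real r * steer n p m) = - \<i> * of_real r"
proof -
  have "cnj (steer n p m) * (- \<i> * of_real r * steer n p m) = - \<i> * of_real r * (cnj (steer n p m) * steer n p m)"
    by (simp add: mult_ac)
  then show ?thesis by simp
qed
lemma cd_cd: "cnj (- \<i> * of_real r * steer n p m) * (- \<i> * of_real r * steer n p m) = of_real (r^2)"
proof -
  have "cnj (- \<i> * of_real r * steer n p m) * (- \<i> * of_real r * steer n p m) = of_real r * of_real r * (cnj (steer n p m) * steer n p m)"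
    by (simp add: mult_ac)
  then show ?thesis by (simp add: power2_eq_square)
qed

lemma sum_cd_c: "(\<Sum>m=1..n. \<i> * of_real (pi * cos p * dd n m / 2)) = 0"
proof -
  have r: "(\<Sum>m=1..n. pi * cos p * dd n m / 2) = pi * cos p / 2 * (\<Sum>m=1..n. dd n m)"
    by (simp add: sum_distrib_left)
  have "(\<Sum>m=1..n. \<i> * of_real (pi * cos p * dd n m / 2)) = \<i> * of_real (\<Sum>m=1..n. pi * cos p * dd n m / 2)"
    by (simp only: sum_distrib_left[symmetric] of_real_sum[symmetric])
  then show ?thesis by (simp only: r sum_dd) simp
qed

lemma cnj_mult_self: "cnj w * w = of_real ((cmod w)^2)"
  by (subst complex_norm_square) (rule mult.commute)

lemma dnorm2_pos: assumes "n \<ge> 2" "p \<in> {-pi/2<..<pi/2}" shows "dnorm2 n p > 0"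
proof -
  have "cos p > 0" using assms(2) by (auto intro!: cos_gt_zero_pi)
  moreover have "(real n)^2 > 1"
  proof -
    have "real n \<ge> 2" using assms(1) by simp
    then have "(real n)^2 \<ge> 2^2" by (rule power_mono) simp
    then show ?thesis by simp
  qed
  ultimately show ?thesis unfolding dnorm2_eq using assms(1) by (auto intro!: divide_pos_pos mult_pos_pos)
qed

lemma ne3: "(2::3) \<noteq> 1" "(3::3) \<noteq> 1" "(3::3) \<noteq> 2" by simp_all

lemma G_entries:
  fixes c :: complex and n :: nat and p :: real
  defines "G \<equiv> \<lambda>i j. (\<Sum>m=1..n. cnj (UU n c p i m) * UU n c p j m)"
  shows "G 1 1 = of_real ((cmod c)^2 * dnorm2 n p)"
    and "G 1 2 = 0" and "G 1 3 = 0" and "G 2 1 = 0" and "G 3 1 = 0"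
    and "G 2 2 = of_nat n" and "G 3 3 = of_nat n" and "G 2 3 = \<i> * of_nat n" and "G 3 2 = - \<i> * of_nat n"
proof -
  let ?r = "\<lambda>m. pi * cos p * dd n m / 2"
  let ?cd = "\<lambda>m. - \<i> * of_real (?r m) * steer n p m"
  have U1: "UU n c p 1 m = c * ?cd m" for m by (simp add: UU_def)
  have U2: "UU n c p 2 m = steer n p m" for m by (simp add: UU_def ne3)
  have U3: "UU n c p 3 m = \<i> * steer n p m" for m by (simp add: UU_def ne3)
  have Z: "(\<Sum>m=1..n. \<i> * of_real (?r m)) = 0" by (rule sum_cd_c)
  have Zs: "(\<Sum>m=1..n. cnj (?cd m) * steer n p m) = 0" unfolding cd_c by (rule Z)
  have Zs': "(\<Sum>m=1..n. cnj (steer n p m) * ?cd m) = 0"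
  proof -
    have "(\<Sum>m=1..n. cnj (steer n p m) * ?cd m) = - (\<Sum>m=1..n. \<i> * of_real (?r m))"
      unfolding c_cd by (simp add: sum_negf)
    then show ?thesis using Z by simp
  qed
  have "G 1 1 = (\<Sum>m=1..n. of_real ((cmod c)^2 * (cmod (?cd m))^2))"
    unfolding G_def U1 cnj_mult_self norm_mult power_mult_distrib by (rule refl)
  also have "\<dots> = of_real ((cmod c)^2 * dnorm2 n p)"
    unfolding dnorm2_def steer_vd by (simp add: sum_distrib_left)
  finally show "G 1 1 = of_real ((cmod c)^2 * dnorm2 n p)" .
  have "G 1 2 = cnj c * (\<Sum>m=1..n. cnj (?cd m) * steer n p m)"
    unfolding G_def U1 U2 sum_distrib_left by (intro sum.cong refl) (simp only: complex_cnj_mult mult.assoc)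
  then show "G 1 2 = 0" using Zs by simp
  have "G 1 3 = \<i> * cnj c * (\<Sum>m=1..n. cnj (?cd m) * steer n p m)"
    unfolding G_def U1 U3 sum_distrib_left by (intro sum.cong refl) (simp only: complex_cnj_mult mult.assoc mult.left_commute)
  then show "G 1 3 = 0" using Zs by simp
  have "G 2 1 = c * (\<Sum>m=1..n. cnj (steer n p m) * ?cd m)"
    unfolding G_def U1 U2 sum_distrib_left by (intro sum.cong refl) (simp only: mult.assoc mult.left_commute)
  then show "G 2 1 = 0" using Zs' by simp
  have "G 3 1 = cnj \<i> * c * (\<Sum>m=1..n. cnj (steer n p m) * ?cd m)"
    unfolding G_def U1 U3 sum_distrib_left by (intro sum.cong refl) (simp only: complex_cnj_mult mult.assoc mult.left_commute)
  then show "G 3 1 = 0" using Zs' by simp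
  show "G 2 2 = of_nat n" unfolding G_def U2 by simp
  have "G 3 3 = (\<Sum>m=1..n. cnj (steer n p m) * steer n p m)"
    unfolding G_def U3 by (intro sum.cong refl) (simp add: mult_ac)
  then show "G 3 3 = of_nat n" by simp
  have "G 2 3 = (\<Sum>m=1..n. \<i> * (cnj (steer n p m) * steer n p m))"
    unfolding G_def U2 U3 by (intro sum.cong refl) (simp add: mult_ac)
  then show "G 2 3 = \<i> * of_nat n" by simp
  have "G 3 2 = (\<Sum>m=1..n. - \<i> * (cnj (steer n p m) * steer n p m))"
    unfolding G_def U2 U3 by (intro sum.cong refl) (simp add: mult_ac)
  then show "G 3 2 = - \<i> * of_nat n" by simp
qed

lemma crb_eq:
  fixes t :: "nat \<Rightarrow> nat \<Rightarrow> complex"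
  assumes N1: "N \<ge> 1" and L1: "L \<ge> 1" and Ne2: "Ne \<ge> 2" and P: "P > 0" and tau: "\<tau> > 0" and sig: "\<sigma> > 0"
    and c4: "c4 \<noteq> 0" and al: "\<alpha> \<noteq> 0" and ph: "\<phi> \<in> {-pi/2<..<pi/2}"
    and orth: "\<forall>k\<in>{3..N}. cinner N (atil N \<theta>) (t k) = 0"
    and XX: "\<forall>i\<in>{1..N}. \<forall>i'\<in>{1..N}.
           (\<Sum>l=1..L. X i l * cnj (X i' l)) / of_nat L
           = complex_of_real (P * \<tau>) * tvec1 N \<theta> h \<alpha> \<beta> i * cnj (tvec1 N \<theta> h \<alpha> \<beta> i')
             + complex_of_real g2 * (\<Sum>k=3..N. t k i * cnj (t k i'))"
  shows "crb N Ne L \<theta> X \<sigma> c4 \<phi> = \<sigma>^2 / (2 * (cmod c4)^2 * real L * (P * \<tau>) * dnorm2 Ne \<phi> * (cmod \<alpha>)^2 * real N)"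
proof -
  define Bv where "Bv = real L * (P*\<tau>) * (cmod \<alpha>)^2 * real N"
  have B: "(\<Sum>l=1..L. cnj (bb N \<theta> X l) * bb N \<theta> X l) = of_real Bv"
    unfolding Bv_def by (rule bb_norm[OF N1 L1 orth XX])
  have Bpos: "Bv > 0" unfolding Bv_def using N1 L1 P tau al by simp
  have D: "dnorm2 Ne \<phi> > 0" by (rule dnorm2_pos[OF Ne2 ph])
  define F where "F = fisher N Ne L \<theta> X \<sigma> (vector [\<phi>, Re c4, Im c4])"
  note G = G_entries[of Ne c4 \<phi>]
  have F: "F $ i $ j = 2 / \<sigma>^2 * Re ((\<Sum>m=1..Ne. cnj (UU Ne c4 \<phi> i m) * UU Ne c4 \<phi> j m) * of_real Bv)" for i j
    unfolding F_def fisher_UU B ..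
  have F11: "F$1$1 = 2 / \<sigma>^2 * ((cmod c4)^2 * dnorm2 Ne \<phi> * Bv)"
    unfolding F G(1) by (simp flip: of_real_mult)
  have "matrix_inv F $ 1 $ 1 = 1 / F$1$1"
    apply (rule matrix_inv_diag3)
    unfolding F G using sig Ne2 Bpos D c4 by (simp_all flip: of_real_mult)
  then show ?thesis unfolding crb_def F_def[symmetric] F11 Bv_def
    using sig by (simp add: field_simps)
qed



lemma meas_cos:
  fixes x :: real
  assumes x0: "x > 0"
  shows "measure (uniform_measure lborel {-pi/2<..<pi/2}) {\<phi>\<in>{-pi/2<..<pi/2}. cos \<phi> < x}
       = (if x < 1 then 2 / pi * arcsin x else 1)"
proof -
  define S where "S = {-pi/2<..<pi/2::real}"
  have mS: "measure lborel S = pi" unfolding S_def by simp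
  have eS: "emeasure lborel S \<noteq> 0" "emeasure lborel S \<noteq> \<infinity>" unfolding S_def by simp_all
  show ?thesis
  proof (cases "x \<le> 1")
    case True
    define a where "a = arccos x"
    have a0: "0 \<le> a" unfolding a_def using x0 True by (auto intro!: arccos_lbound)
    have "arccos x < arccos 0" using x0 True by (intro arccos_less_arccos) auto
    then have a1: "a < pi/2" unfolding a_def by simp
    have cx: "cos a = x" unfolding a_def using x0 True by simp
    have iff: "cos \<phi> < x \<longleftrightarrow> a < \<bar>\<phi>\<bar>" if "\<phi> \<in> S" for \<phi>
    proof -
      have "cos \<phi> = cos \<bar>\<phi>\<bar>" by (simp add: abs_real_def)
      moreover have "\<bar>\<phi>\<bar> \<le> pi" using that by (auto simp: S_def)
      ultimately show ?thesis using cos_mono_less_eq[of "\<bar>\<phi>\<bar>" a] a0 a1 cx by simp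
    qed
    have A: "{\<phi>\<in>S. cos \<phi> < x} = {-pi/2<..< -a} \<union> {a<..<pi/2}"
      using iff a0 a1 unfolding S_def by auto
    have m: "measure lborel ({-pi/2<..< -a} \<union> {a<..<pi/2}) = (pi/2 - a) + (pi/2 - a)"
      by (subst measure_Union) (use a0 a1 in auto)
    have "measure (uniform_measure lborel S) {\<phi>\<in>S. cos \<phi> < x} = (pi - 2 * a) / pi"
    proof -
      have I: "S \<inter> ({-pi/2<..< -a} \<union> {a<..<pi/2}) = {-pi/2<..< -a} \<union> {a<..<pi/2}"
        using a0 a1 unfolding S_def by auto
      show ?thesis using eS m mS A I by simp
    qed
    also have "\<dots> = (if x < 1 then 2 / pi * arcsin x else 1)"
      using True x0 by (auto simp: a_def arccos_arcsin_eq field_simps)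
    finally show ?thesis unfolding S_def .
  next
    case False
    have A: "{\<phi>\<in>S. cos \<phi> < x} = S" using False by (auto intro: le_less_trans[OF cos_le_one])
    show ?thesis using False eS mS unfolding S_def[symmetric] A by (simp add: S_def)
  qed
qed


lemma gen_id: fixes s c l p t pi2 q n z a NN :: real
  shows "s / (2 * c * l * (p * t) * (pi2 * q * n * z / 12) * a * NN) = 6 * s / (n * NN * pi2 * l * p * c * a * t * z * q)"
proof -
  have "2 * c * l * (p * t) * (pi2 * q * n * z / 12) * a * NN = (n * NN * pi2 * l * p * c * a * t * z * q) / 6"
    by (simp add: mult_ac)
  then show ?thesis by (simp add: mult_ac)
qed

theorem lemma7:
  fixes N Ne L :: nat and P \<tau> \<sigma>R \<theta> :: real and c4 \<alpha> \<beta> :: complex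
    and h :: "nat \<Rightarrow> complex" and X :: "nat \<Rightarrow> nat \<Rightarrow> complex" and t :: "nat \<Rightarrow> nat \<Rightarrow> complex"
  assumes "N \<ge> 3" and "Ne \<ge> 2" and "L \<ge> 1" and "P > 0" and "0 < \<tau>" and "\<tau> \<le> 1" and "\<sigma>R > 0"
    and "c4 \<noteq> 0" and "\<alpha> \<noteq> 0" and "(cmod \<alpha>)^2 + (cmod \<beta>)^2 = 1"
    and "\<not> (\<exists>z. \<forall>i\<in>{1..N}. h i = z * steer N \<theta> i)"
    and "\<forall>k\<in>{3..N}. \<forall>k'\<in>{3..N}. cinner N (t k) (t k') = (if k = k' then 1 else 0)"
    and "\<forall>k\<in>{3..N}. cinner N (atil N \<theta>) (t k) = 0 \<and> cinner N (htil N \<theta> h) (t k) = 0"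
    and "\<forall>i\<in>{1..N}. \<forall>i'\<in>{1..N}.
           (\<Sum>l=1..L. X i l * cnj (X i' l)) / of_nat L
           = complex_of_real (P * \<tau>) * tvec1 N \<theta> h \<alpha> \<beta> i * cnj (tvec1 N \<theta> h \<alpha> \<beta> i')
             + complex_of_real ((1 - \<tau>) * P / (real N - 2)) * (\<Sum>k=3..N. t k i * cnj (t k i'))"
  shows "(\<forall>\<phi>\<in>{-pi/2<..<pi/2}.
            crb N Ne L \<theta> X \<sigma>R c4 \<phi>
              = \<sigma>R^2 / (2 * (cmod c4)^2 * real L * (P * \<tau>) * dnorm2 Ne \<phi> * (cmod \<alpha>)^2 * real N)
          \<and> dnorm2 Ne \<phi> = pi^2 * (cos \<phi>)^2 * real Ne * ((real Ne)^2 - 1) / 12)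
       \<and> (\<forall>\<epsilon>>0. let x = sqrt 6 * \<sigma>R * (\<epsilon> * real Ne * real N * pi^2 * real L * P * (cmod c4)^2
                            * (cmod \<alpha>)^2 * \<tau> * ((real Ne)^2 - 1)) powr (-1/2)
               in measure (uniform_measure lborel {-pi/2<..<pi/2})
                    {\<phi>\<in>{-pi/2<..<pi/2}. crb N Ne L \<theta> X \<sigma>R c4 \<phi> > \<epsilon>}
                  = (if x < 1 then 2 / pi * arcsin x else 1))"
  proof -
  note A = assms
  have N1: "N \<ge> 1" and N2: "real N - 2 > 0" using A(1) by auto
  have orth: "\<forall>k\<in>{3..N}. cinner N (atil N \<theta>) (t k) = 0" using A(13) by blast
  have crbE: "crb N Ne L \<theta> X \<sigma>R c4 \<phi>
      = \<sigma>R^2 / (2 * (cmod c4)^2 * real L * (P * \<tau>) * dnorm2 Ne \<phi> * (cmod \<alpha>)^2 * real N)"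
    if "\<phi> \<in> {-pi/2<..<pi/2}" for \<phi>
    by (rule crb_eq[OF N1 A(3) A(2) A(4) A(5) A(7) A(8) A(9) that orth A(14)])
  have part1: "\<forall>\<phi>\<in>{-pi/2<..<pi/2}.
            crb N Ne L \<theta> X \<sigma>R c4 \<phi>
              = \<sigma>R^2 / (2 * (cmod c4)^2 * real L * (P * \<tau>) * dnorm2 Ne \<phi> * (cmod \<alpha>)^2 * real N)
          \<and> dnorm2 Ne \<phi> = pi^2 * (cos \<phi>)^2 * real Ne * ((real Ne)^2 - 1) / 12"
  proof (intro ballI conjI)
    fix \<phi> :: real assume "\<phi> \<in> {-pi/2<..<pi/2}"
    then show "crb N Ne L \<theta> X \<sigma>R c4 \<phi>
              = \<sigma>R^2 / (2 * (cmod c4)^2 * real L * (P * \<tau>) * dnorm2 Ne \<phi> * (cmod \<alpha>)^2 * real N)"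
      by (rule crbE)
    show "dnorm2 Ne \<phi> = pi^2 * (cos \<phi>)^2 * real Ne * ((real Ne)^2 - 1) / 12" by (rule dnorm2_eq)
  qed
  have part2: "let x = sqrt 6 * \<sigma>R * (\<epsilon> * real Ne * real N * pi^2 * real L * P * (cmod c4)^2
                            * (cmod \<alpha>)^2 * \<tau> * ((real Ne)^2 - 1)) powr (-1/2)
               in measure (uniform_measure lborel {-pi/2<..<pi/2})
                    {\<phi>\<in>{-pi/2<..<pi/2}. crb N Ne L \<theta> X \<sigma>R c4 \<phi> > \<epsilon>}
                  = (if x < 1 then 2 / pi * arcsin x else 1)" if eps: "\<epsilon> > 0" for \<epsilon>
  proof -
    define K where "K = real Ne * real N * pi^2 * real L * P * (cmod c4)^2 * (cmod \<alpha>)^2 * \<tau> * ((real Ne)^2 - 1)"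
    have ne1: "(real Ne)^2 - 1 > 0"
    proof -
      have "real Ne \<ge> 2" using A(2) by simp
      then have "(real Ne)^2 \<ge> 2^2" by (rule power_mono) simp
      then show ?thesis by simp
    qed
    have Kpos: "K > 0" unfolding K_def using A(2) N1 A(3) A(4) A(5) A(8) A(9) ne1 by simp
    define x where "x = sqrt 6 * \<sigma>R * (\<epsilon> * K) powr (-1/2)"
    have eK: "\<epsilon> * K > 0" using eps Kpos by simp
    have xs: "x = sqrt 6 * \<sigma>R / sqrt (\<epsilon> * K)"
    proof -
      have "(\<epsilon> * K) powr (-1/2) = (\<epsilon> * K) powr (- (1/2))" by simp
      also have "\<dots> = 1 / sqrt (\<epsilon> * K)" using eK by (simp add: powr_minus_divide powr_half_sqrt)
      finally show ?thesis unfolding x_def by simp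
    qed
    have x0: "x > 0" unfolding xs using A(7) eK by simp
    have x2: "x^2 = 6 * \<sigma>R^2 / (\<epsilon> * K)" unfolding xs using eK
      by (simp add: power_divide power_mult_distrib)
    have iff: "crb N Ne L \<theta> X \<sigma>R c4 \<phi> > \<epsilon> \<longleftrightarrow> cos \<phi> < x" if ph: "\<phi> \<in> {-pi/2<..<pi/2}" for \<phi>
    proof -
      have Q: "cos \<phi> > 0" using ph by (auto intro!: cos_gt_zero_pi)
      have c: "crb N Ne L \<theta> X \<sigma>R c4 \<phi> = 6 * \<sigma>R^2 / (K * (cos \<phi>)^2)"
        unfolding crbE[OF ph] dnorm2_eq K_def by (rule gen_id)
      have KQ: "K * (cos \<phi>)^2 > 0" using Kpos Q by simp
      have "crb N Ne L \<theta> X \<sigma>R c4 \<phi> > \<epsilon> \<longleftrightarrow> \<epsilon> * (K * (cos \<phi>)^2) < 6 * \<sigma>R^2"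
        unfolding c using KQ by (simp add: pos_less_divide_eq)
      also have "\<dots> \<longleftrightarrow> (cos \<phi>)^2 < x^2"
        unfolding x2 using eK by (simp add: pos_less_divide_eq mult_ac)
      also have "\<dots> \<longleftrightarrow> cos \<phi> < x"
      proof
        assume h: "(cos \<phi>)^2 < x^2" show "cos \<phi> < x" using power2_less_imp_less[OF h] x0 by simp
      next
        assume h: "cos \<phi> < x" show "(cos \<phi>)^2 < x^2" using power_strict_mono[OF h, of 2] Q by simp
      qed
      finally show ?thesis .
      qed
    have S: "{\<phi>\<in>{-pi/2<..<pi/2}. crb N Ne L \<theta> X \<sigma>R c4 \<phi> > \<epsilon>} = {\<phi>\<in>{-pi/2<..<pi/2}. cos \<phi> < x}"
      using iff by auto
    have eqK: "\<epsilon> * real Ne * real N * pi^2 * real L * P * (cmod c4)^2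
                            * (cmod \<alpha>)^2 * \<tau> * ((real Ne)^2 - 1) = \<epsilon> * K"
      unfolding K_def by (simp only: mult_ac)
    show ?thesis unfolding Let_def eqK x_def[symmetric] S using meas_cos[OF x0] .
  qed
  show ?thesis
    apply (rule conjI)
     apply (rule part1)
    apply (intro allI impI)
    apply (rule part2)
    apply assumption
    done
qed

end
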